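(* Let $G$ be an infinite group in which every non-abelian subgroup $H$ satisfies $C_G(H)\le H$. Then every normal subgroup of $G$ is abelian or infinite.
   Context: $C_G(H)$ denotes the centralizer of $H$ in $G$. *)

theory Defs
  imports "HOL-Algebra.Algebra"
begin

definition centralizer :: "('a, 'b) monoid_scheme \<Rightarrow> 'a set \<Rightarrow> 'a set" where
  "centralizer G H = {g \<in> carrier G. \<forall>h\<in>H. g \<otimes>\<^bsub>G\<^esub> h = h \<otimes>\<^bsub>G\<^esub> g}"

definition abelian_subset :: "('a, 'b) monoid_scheme \<Rightarrow> 'a set \<Rightarrow> bool" where
  "abelian_subset G H \<longleftrightarrow> (\<forall>x\<in>H. \<forall>y\<in>H. x \<otimes>\<^bsub>G\<^esub> y = y \<otimes>\<^bsub>G\<^esub> x)"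

end

theory Submission
  imports Defs
begin

theorem lemma2p3:
  fixes G (structure)
  assumes "group G"
    and "infinite (carrier G)"
    and "\<And>H. subgroup H G \<Longrightarrow> \<not> abelian_subset G H \<Longrightarrow> centralizer G H \<subseteq> H"
    and "N \<lhd> G"
  shows "abelian_subset G N \<or> infinite N"
proof (rule ccontr)
  interpret group G by (rule assms(1))
  assume "\<not> (abelian_subset G N \<or> infinite N)"
  hence na: "\<not> abelian_subset G N" and fin: "finite N" by auto
  have sub: "subgroup N G" using assms(4) by (rule normal_imp_subgroup)
  have conj: "\<And>x h. x \<in> carrier G \<Longrightarrow> h \<in> N \<Longrightarrow> x \<otimes> h \<otimes> inv x \<in> N"
    using assms(4) normal_inv_iff by blast
  have NG: "N \<subseteq> carrier G" using sub subgroup.subset by blast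
  have CN: "centralizer G N \<subseteq> N" using assms(3)[OF sub na] .
  define \<phi> where "\<phi> g = (\<lambda>n\<in>N. g \<otimes> n \<otimes> inv g)" for g
  have img: "\<phi> ` carrier G \<subseteq> N \<rightarrow>\<^sub>E N"
    using conj by (auto simp: \<phi>_def)
  have finimg: "finite (\<phi> ` carrier G)"
    by (rule finite_subset[OF img]) (simp add: finite_PiE fin)
  define r where "r f = (SOME h. h \<in> carrier G \<and> \<phi> h = f)" for f
  have cover: "carrier G \<subseteq> (\<Union>f\<in>\<phi> ` carrier G. (\<lambda>c. r f \<otimes> c) ` N)"
  proof
    fix g assume g: "g \<in> carrier G"
    let ?h = "r (\<phi> g)"
    have h: "?h \<in> carrier G \<and> \<phi> ?h = \<phi> g"
      unfolding r_def by (rule someI[of _ g]) (simp add: g)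
    hence hG: "?h \<in> carrier G" and eq: "\<phi> ?h = \<phi> g" by auto
    let ?c = "inv ?h \<otimes> g"
    have cG: "?c \<in> carrier G" using hG g by simp
    have "?c \<in> centralizer G N"
      unfolding centralizer_def
    proof (intro CollectI conjI ballI cG)
      fix n assume n: "n \<in> N"
      hence nG: "n \<in> carrier G" using NG by blast
      have "?h \<otimes> n \<otimes> inv ?h = g \<otimes> n \<otimes> inv g"
        using fun_cong[OF eq, of n] n by (simp add: \<phi>_def)
      hence e: "inv ?h \<otimes> (?h \<otimes> n \<otimes> inv ?h) \<otimes> g = inv ?h \<otimes> (g \<otimes> n \<otimes> inv g) \<otimes> g"
        by simp
      have l: "inv ?h \<otimes> (?h \<otimes> n \<otimes> inv ?h) \<otimes> g = n \<otimes> ?c"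
        using hG g nG by (simp add: m_assoc[symmetric] l_inv)
      have r: "inv ?h \<otimes> (g \<otimes> n \<otimes> inv g) \<otimes> g = ?c \<otimes> n"
        using hG g nG by (simp add: m_assoc)
      show "?c \<otimes> n = n \<otimes> ?c" using e l r by simp
    qed
    hence cN: "?c \<in> N" using CN by blast
    have "g = ?h \<otimes> ?c" using hG g by (simp add: m_assoc[symmetric])
    thus "g \<in> (\<Union>f\<in>\<phi> ` carrier G. (\<lambda>c. r f \<otimes> c) ` N)"
      using g cN by blast
  qed
  have "finite (\<Union>f\<in>\<phi> ` carrier G. (\<lambda>c. r f \<otimes> c) ` N)"
    using finimg fin by blast
  hence "finite (carrier G)" using cover finite_subset by blast
  thus False using assms(2) by simp
qed

end
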